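(* Let $A$ be a finite nonempty set of actions and $\boldsymbol{v}^0,\boldsymbol{v}^1,\dots\in\mathbb{R}^{|A|}$ an arbitrary sequence of value vectors. If $\boldsymbol{\sigma}^0,\boldsymbol{\sigma}^1,\dots$ is the sequence of regret-matching policies, or the sequence of regret-matching$^+$ policies, generated from $\boldsymbol{v}^0,\boldsymbol{v}^1,\dots$, then for all $t\ge 0$, $$\boldsymbol{\sigma}^{t+1}\cdot\boldsymbol{v}^t\ge\boldsymbol{\sigma}^t\cdot\boldsymbol{v}^t.$$
   Context: For $x\in\mathbb{R}$, $x^+:=\max(x,0)$, applied componentwise to vectors. Define $\boldsymbol{\sigma}_{\mathrm{rm}}(\boldsymbol{x}):=\boldsymbol{x}^+/(\boldsymbol{1}\cdot\boldsymbol{x}^+)$ if some $x_a>0$, and $\boldsymbol{1}/|A|$ otherwise. Regret-matching: $\boldsymbol{r}^0=\boldsymbol{0}$, $\boldsymbol{\sigma}^t=\boldsymbol{\sigma}_{\mathrm{rm}}(\boldsymbol{r}^t)$, $\boldsymbol{r}^{t+1}=\boldsymbol{r}^t+\boldsymbol{v}^t-(\boldsymbol{\sigma}^t\cdot\boldsymbol{v}^t)\boldsymbol{1}$. Regret-matching$^+$: $\boldsymbol{q}^0=\boldsymbol{0}$, $\boldsymbol{\sigma}^t=\boldsymbol{\sigma}_{\mathrm{rm}}(\boldsymbol{q}^t)$, $\boldsymbol{q}^{t+1}=\bigl(\boldsymbol{q}^t+\boldsymbol{v}^t-(\boldsymbol{\sigma}^t\cdot\boldsymbol{v}^t)\boldsymbol{1}\bigr)^+$.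 *)

theory Defs
  imports Complex_Main
begin

text \<open>Action set A (finite, nonempty); vectors in R^|A| are functions 'a => real,
  only their values on A matter. x^+ is componentwise max x 0.\<close>

definition pos_part :: "('a \<Rightarrow> real) \<Rightarrow> 'a \<Rightarrow> real" where
  "pos_part x = (\<lambda>a. max (x a) 0)"

definition dotA :: "'a set \<Rightarrow> ('a \<Rightarrow> real) \<Rightarrow> ('a \<Rightarrow> real) \<Rightarrow> real" where
  "dotA A x y = (\<Sum>a\<in>A. x a * y a)"

definition sigma_rm :: "'a set \<Rightarrow> ('a \<Rightarrow> real) \<Rightarrow> 'a \<Rightarrow> real" where
  "sigma_rm A x = (if \<exists>a\<in>A. x a > 0
     then (\<lambda>a. pos_part x a / (\<Sum>b\<in>A. pos_part x b))
     else (\<lambda>a. 1 / real (card A)))"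

primrec rm_regret :: "'a set \<Rightarrow> (nat \<Rightarrow> 'a \<Rightarrow> real) \<Rightarrow> nat \<Rightarrow> 'a \<Rightarrow> real" where
  "rm_regret A v 0 = (\<lambda>a. 0)"
| "rm_regret A v (Suc t) =
     (\<lambda>a. rm_regret A v t a + v t a - dotA A (sigma_rm A (rm_regret A v t)) (v t))"

definition rm_policy :: "'a set \<Rightarrow> (nat \<Rightarrow> 'a \<Rightarrow> real) \<Rightarrow> nat \<Rightarrow> 'a \<Rightarrow> real" where
  "rm_policy A v t = sigma_rm A (rm_regret A v t)"

primrec rmp_regret :: "'a set \<Rightarrow> (nat \<Rightarrow> 'a \<Rightarrow> real) \<Rightarrow> nat \<Rightarrow> 'a \<Rightarrow> real" where
  "rmp_regret A v 0 = (\<lambda>a. 0)"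
| "rmp_regret A v (Suc t) = pos_part
     (\<lambda>a. rmp_regret A v t a + v t a - dotA A (sigma_rm A (rmp_regret A v t)) (v t))"

definition rmp_policy :: "'a set \<Rightarrow> (nat \<Rightarrow> 'a \<Rightarrow> real) \<Rightarrow> nat \<Rightarrow> 'a \<Rightarrow> real" where
  "rmp_policy A v t = sigma_rm A (rmp_regret A v t)"

end

theory Submission
  imports Defs
begin

lemma sum_sigma:
  assumes "finite A" "A \<noteq> {}"
  shows "(\<Sum>a\<in>A. sigma_rm A x a) = 1"
proof (cases "\<exists>a\<in>A. x a > 0")
  case True
  then obtain b where b: "b \<in> A" "x b > 0" by auto
  have "(\<Sum>a\<in>A. pos_part x a) \<ge> pos_part x b"
    by (rule member_le_sum) (auto simp: pos_part_def b assms)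
  hence "(\<Sum>a\<in>A. pos_part x a) > 0" using b by (simp add: pos_part_def)
  thus ?thesis using True by (simp add: sigma_rm_def sum_divide_distrib[symmetric])
next
  case False
  thus ?thesis using assms by (simp add: sigma_rm_def)
qed

lemma sigma_pos: "sigma_rm A (pos_part z) = sigma_rm A z"
  unfolding sigma_rm_def pos_part_def by auto

lemma key:
  assumes fin: "finite A" and ne: "A \<noteq> {}"
  shows "dotA A (sigma_rm A (\<lambda>a. x a + w a - dotA A (sigma_rm A x) w)) w
         \<ge> dotA A (sigma_rm A x) w"
proof -
  define c where "c = dotA A (sigma_rm A x) w"
  define g where "g = (\<lambda>a. w a - c)"
  define z where "z = (\<lambda>a. x a + w a - c)"
  have shift: "dotA A (sigma_rm A y) w - c = dotA A (sigma_rm A y) g" for y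
  proof -
    have "dotA A (sigma_rm A y) g = dotA A (sigma_rm A y) w - c * (\<Sum>a\<in>A. sigma_rm A y a)"
      by (simp add: dotA_def g_def algebra_simps sum_subtractf sum_distrib_left)
    thus ?thesis using sum_sigma[OF fin ne] by simp
  qed
  have H0: "dotA A (sigma_rm A x) g = 0" using shift[of x] by (simp add: c_def)
  have pw: "pos_part z a * g a \<ge> pos_part x a * g a" for a
  proof (cases "g a \<ge> 0")
    case True
    have "pos_part z a \<ge> pos_part x a" using True by (auto simp: pos_part_def z_def g_def)
    thus ?thesis using True by (simp add: mult_right_mono)
  next
    case False
    have "pos_part z a \<le> pos_part x a" using False by (auto simp: pos_part_def z_def g_def)
    thus ?thesis using False by (simp add: mult_right_mono_neg)
  qed
  have sumpw: "(\<Sum>a\<in>A. pos_part z a * g a) \<ge> (\<Sum>a\<in>A. pos_part x a * g a)"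
    by (rule sum_mono) (use pw in auto)
  have zpos_case: "dotA A (sigma_rm A z) g \<ge> 0"
    if zp: "\<exists>a\<in>A. z a > 0" and s0: "(\<Sum>a\<in>A. pos_part x a * g a) \<ge> 0"
  proof -
    have "dotA A (sigma_rm A z) g = (\<Sum>a\<in>A. pos_part z a * g a) / (\<Sum>b\<in>A. pos_part z b)"
      using zp by (simp add: sigma_rm_def dotA_def sum_divide_distrib)
    moreover have "(\<Sum>b\<in>A. pos_part z b) \<ge> 0" by (rule sum_nonneg) (simp add: pos_part_def)
    ultimately show ?thesis using sumpw s0 by simp
  qed
  have "dotA A (sigma_rm A z) g \<ge> 0"
  proof (cases "\<exists>a\<in>A. x a > 0")
    case True
    then obtain b where b: "b \<in> A" "x b > 0" by auto
    have "(\<Sum>a\<in>A. pos_part x a) \<ge> pos_part x b"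
      by (rule member_le_sum) (auto simp: pos_part_def b fin)
    hence Sx: "(\<Sum>a\<in>A. pos_part x a) > 0" using b by (simp add: pos_part_def)
    have "dotA A (sigma_rm A x) g = (\<Sum>a\<in>A. pos_part x a * g a) / (\<Sum>b\<in>A. pos_part x b)"
      using True by (simp add: sigma_rm_def dotA_def sum_divide_distrib)
    hence S0: "(\<Sum>a\<in>A. pos_part x a * g a) = 0" using H0 Sx by simp
    show ?thesis
    proof (cases "\<exists>a\<in>A. z a > 0")
      case True
      thus ?thesis using zpos_case S0 by simp
    next
      case False
      hence zp0: "pos_part z a = 0" if "a \<in> A" for a using that by (auto simp: pos_part_def)
      have le0: "pos_part x a * g a \<le> 0" if "a \<in> A" for a using pw[of a] zp0[OF that] by simp
      have "\<forall>a\<in>A. pos_part x a * g a = 0"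
      proof -
        have "(\<Sum>a\<in>A. - (pos_part x a * g a)) = 0" using S0 by (simp add: sum_negf)
        thus ?thesis using sum_nonneg_eq_0_iff[OF fin, of "\<lambda>a. - (pos_part x a * g a)"] le0 by auto
      qed
      hence "g b = 0" using b by (force simp: pos_part_def)
      hence "z b > 0" using b by (simp add: z_def g_def)
      thus ?thesis using False b by auto
    qed
  next
    case False
    hence xp0: "pos_part x a = 0" if "a \<in> A" for a using that by (auto simp: pos_part_def)
    have S0: "(\<Sum>a\<in>A. pos_part x a * g a) = 0" by (simp add: xp0)
    have "dotA A (sigma_rm A x) g = (\<Sum>a\<in>A. g a) / real (card A)"
      using False by (simp add: sigma_rm_def dotA_def sum_divide_distrib)
    hence G0: "(\<Sum>a\<in>A. g a) = 0" using H0 fin ne by simp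
    show ?thesis
    proof (cases "\<exists>a\<in>A. z a > 0")
      case True
      thus ?thesis using zpos_case S0 by simp
    next
      case False
      hence "dotA A (sigma_rm A z) g = (\<Sum>a\<in>A. g a) / real (card A)"
        by (simp add: sigma_rm_def dotA_def sum_divide_distrib)
      thus ?thesis using G0 by simp
    qed
  qed
  thus ?thesis using shift[of z] by (simp add: z_def c_def)
qed

theorem theorem2:
  fixes A :: "'a set" and v :: "nat \<Rightarrow> 'a \<Rightarrow> real"
    and \<sigma> :: "nat \<Rightarrow> 'a \<Rightarrow> real" and t :: nat
  assumes "finite A" and "A \<noteq> {}"
    and "\<sigma> = rm_policy A v \<or> \<sigma> = rmp_policy A v"
  shows "dotA A (\<sigma> (Suc t)) (v t) \<ge> dotA A (\<sigma> t) (v t)"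
  using assms(3)
proof
  assume "\<sigma> = rm_policy A v"
  thus ?thesis using key[OF assms(1,2), of "rm_regret A v t" "v t"]
    by (simp add: rm_policy_def)
next
  assume "\<sigma> = rmp_policy A v"
  thus ?thesis using key[OF assms(1,2), of "rmp_regret A v t" "v t"]
    by (simp add: rmp_policy_def sigma_pos)
qed

end
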